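(* Let $(U,\tau_R,\rho)$ be a general ordered topological approximation space and $A\subseteq U$. Then $\underline{R}_{Inc}(A)\subseteq\underline{\alpha}_{Inc}(A)\subseteq\underline{S}_{Inc}(A)$ and $\underline{R}_{Dec}(A)\subseteq\underline{\alpha}_{Dec}(A)\subseteq\underline{S}_{Dec}(A)$.
   Context: A general ordered topological approximation space (GOTAS) is a triple $(U,\tau_R,\rho)$ where $U$ is a non-empty set, $R$ is a binary relation on $U$, $\tau_R$ is a topology on $U$ generated by $R$, and $\rho$ is a partial order on $U$. A subset $A\subseteq U$ is increasing (resp. decreasing) if whenever $a\in A$, $x\in U$ and $a\,\rho\,x$ (resp. $x\,\rho\,a$), then $x\in A$. For $A\subseteq U$: $\underline{R}_{Inc}(A)$ is the greatest subset of $A$ that is both $\tau_R$-open and increasing; $\underline{R}_{Dec}(A)$ is the greatest subset of $A$ that is $\tau_R$-open and decreasing; $\overline{R}^{Inc}(A)$ is the smallest superset of $A$ that is $\tau_R$-closed and increasing; $\overline{R}^{Dec}(A)$ is the smallest superset of $A$ that is $\tau_R$-closed and decreasing. Define $\underline{\alpha}_{Inc}(A)=A\cap\underline{R}_{Inc}(\overline{R}^{Inc}(\underline{R}_{Inc}(A)))$, $\underline{\alpha}_{Dec}(A)=A\cap\underline{R}_{Dec}(\overline{R}^{Dec}(\underline{R}_{Dec}(A)))$, $\underline{S}_{Inc}(A)=A\cap\overline{R}^{Inc}(\underline{R}_{Inc}(A))$, $\underline{S}_{Dec}(A)=A\cap\overline{R}^{Dec}(\underline{R}_{Dec}(A))$.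 *)

theory Defs
  imports "HOL-Analysis.Analysis"
begin

text \<open>Topology on U generated by a binary relation R: subbase consisting of the
  after-sets (right neighbourhoods) xR = R``{x} for x in U, together with U itself
  (so that the carrier of the topology is exactly U).\<close>
definition tau_R :: "'a set \<Rightarrow> ('a \<times> 'a) set \<Rightarrow> 'a topology" where
  "tau_R U R = topology_generated_by (insert U {R `` {x} | x. x \<in> U})"

definition increasing_in :: "'a set \<Rightarrow> ('a \<times> 'a) set \<Rightarrow> 'a set \<Rightarrow> bool" where
  "increasing_in U \<rho> A \<longleftrightarrow> (\<forall>a x. a \<in> A \<and> x \<in> U \<and> (a, x) \<in> \<rho> \<longrightarrow> x \<in> A)"

definition decreasing_in :: "'a set \<Rightarrow> ('a \<times> 'a) set \<Rightarrow> 'a set \<Rightarrow> bool" where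
  "decreasing_in U \<rho> A \<longleftrightarrow> (\<forall>a x. a \<in> A \<and> x \<in> U \<and> (x, a) \<in> \<rho> \<longrightarrow> x \<in> A)"

definition lowerInc :: "'a set \<Rightarrow> ('a \<times> 'a) set \<Rightarrow> ('a \<times> 'a) set \<Rightarrow> 'a set \<Rightarrow> 'a set" where
  "lowerInc U R \<rho> A = \<Union>{G. G \<subseteq> A \<and> openin (tau_R U R) G \<and> increasing_in U \<rho> G}"

definition lowerDec :: "'a set \<Rightarrow> ('a \<times> 'a) set \<Rightarrow> ('a \<times> 'a) set \<Rightarrow> 'a set \<Rightarrow> 'a set" where
  "lowerDec U R \<rho> A = \<Union>{G. G \<subseteq> A \<and> openin (tau_R U R) G \<and> decreasing_in U \<rho> G}"

definition upperInc :: "'a set \<Rightarrow> ('a \<times> 'a) set \<Rightarrow> ('a \<times> 'a) set \<Rightarrow> 'a set \<Rightarrow> 'a set" where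
  "upperInc U R \<rho> A = \<Inter>{F. A \<subseteq> F \<and> closedin (tau_R U R) F \<and> increasing_in U \<rho> F}"

definition upperDec :: "'a set \<Rightarrow> ('a \<times> 'a) set \<Rightarrow> ('a \<times> 'a) set \<Rightarrow> 'a set \<Rightarrow> 'a set" where
  "upperDec U R \<rho> A = \<Inter>{F. A \<subseteq> F \<and> closedin (tau_R U R) F \<and> decreasing_in U \<rho> F}"

definition alphaInc where
  "alphaInc U R \<rho> A = A \<inter> lowerInc U R \<rho> (upperInc U R \<rho> (lowerInc U R \<rho> A))"
definition alphaDec where
  "alphaDec U R \<rho> A = A \<inter> lowerDec U R \<rho> (upperDec U R \<rho> (lowerDec U R \<rho> A))"
definition SInc where
  "SInc U R \<rho> A = A \<inter> upperInc U R \<rho> (lowerInc U R \<rho> A)"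
definition SDec where
  "SDec U R \<rho> A = A \<inter> upperDec U R \<rho> (lowerDec U R \<rho> A)"

definition GOTAS :: "'a set \<Rightarrow> ('a \<times> 'a) set \<Rightarrow> ('a \<times> 'a) set \<Rightarrow> bool" where
  "GOTAS U R \<rho> \<longleftrightarrow> U \<noteq> {} \<and> R \<subseteq> U \<times> U \<and> \<rho> \<subseteq> U \<times> U \<and> partial_order_on U \<rho>"

end

theory Submission
  imports Defs
begin

lemma lowerInc_sub: "lowerInc U R \<rho> X \<subseteq> X" unfolding lowerInc_def by blast
lemma lowerDec_sub: "lowerDec U R \<rho> X \<subseteq> X" unfolding lowerDec_def by blast
lemma upperInc_sup: "X \<subseteq> upperInc U R \<rho> X" unfolding upperInc_def by blast
lemma upperDec_sup: "X \<subseteq> upperDec U R \<rho> X" unfolding upperDec_def by blast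

lemma lowerInc_good: "openin (tau_R U R) (lowerInc U R \<rho> X) \<and> increasing_in U \<rho> (lowerInc U R \<rho> X)"
  unfolding lowerInc_def
  apply (intro conjI)
   apply (rule openin_Union, blast)
  unfolding increasing_in_def by blast

lemma lowerDec_good: "openin (tau_R U R) (lowerDec U R \<rho> X) \<and> decreasing_in U \<rho> (lowerDec U R \<rho> X)"
  unfolding lowerDec_def
  apply (intro conjI)
   apply (rule openin_Union, blast)
  unfolding decreasing_in_def by blast

lemma lowerInc_max: "G \<subseteq> X \<Longrightarrow> openin (tau_R U R) G \<Longrightarrow> increasing_in U \<rho> G \<Longrightarrow> G \<subseteq> lowerInc U R \<rho> X"
  unfolding lowerInc_def by blast
lemma lowerDec_max: "G \<subseteq> X \<Longrightarrow> openin (tau_R U R) G \<Longrightarrow> decreasing_in U \<rho> G \<Longrightarrow> G \<subseteq> lowerDec U R \<rho> X"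
  unfolding lowerDec_def by blast

theorem proposition3p12:
  assumes "GOTAS U R \<rho>" and "A \<subseteq> U"
  shows "lowerInc U R \<rho> A \<subseteq> alphaInc U R \<rho> A \<and> alphaInc U R \<rho> A \<subseteq> SInc U R \<rho> A
       \<and> lowerDec U R \<rho> A \<subseteq> alphaDec U R \<rho> A \<and> alphaDec U R \<rho> A \<subseteq> SDec U R \<rho> A"
proof (intro conjI)
  let ?L = "lowerInc U R \<rho> A"
  have "?L \<subseteq> lowerInc U R \<rho> (upperInc U R \<rho> ?L)"
    using lowerInc_max[OF upperInc_sup] lowerInc_good by metis
  then show "?L \<subseteq> alphaInc U R \<rho> A"
    unfolding alphaInc_def using lowerInc_sub[of U R \<rho> A] by (simp only: Int_greatest)
  let ?D = "lowerDec U R \<rho> A"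
  have "?D \<subseteq> lowerDec U R \<rho> (upperDec U R \<rho> ?D)"
    using lowerDec_max[OF upperDec_sup] lowerDec_good by metis
  then show "?D \<subseteq> alphaDec U R \<rho> A"
    unfolding alphaDec_def using lowerDec_sub[of U R \<rho> A] by (simp only: Int_greatest)
  show "alphaInc U R \<rho> A \<subseteq> SInc U R \<rho> A"
    unfolding alphaInc_def SInc_def using lowerInc_sub by (meson Int_mono order_refl)
  show "alphaDec U R \<rho> A \<subseteq> SDec U R \<rho> A"
    unfolding alphaDec_def SDec_def using lowerDec_sub by (meson Int_mono order_refl)
qed

end
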